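(* Let $n\geq 2$ and let $\mathcal R(P_n)=u_1,\ldots,u_k$, so $u_1>_{\mathcal R}\cdots>_{\mathcal R}u_k$. Let $1<i<j\leq k$, and suppose $u_j$ is divisible by some variable belonging to the ideal $(u_1,\ldots,u_{i-1}):(u_i)$. Then either $u_iu_j$ is not a minimal generator of $J(P_n)^2$, or the expression $u_iu_j$ is not the maximal expression of the monomial $u_iu_j$.
   Context: Let $K$ be a field and $S=K[x_1,\ldots,x_n]$. For $m\geq 1$, $P_m$ is the path graph on vertices $x_1,\ldots,x_m$ with edges $\{x_i,x_{i+1}\}$. The cover ideal $J(P_m)$ is generated by the monomials $\prod_{x\in C}x$ with $C$ a minimal vertex cover of $P_m$. For a monomial ideal $I$, $G(I)$ is its set of minimal monomial generators and $F(I^2)=\{uv:u,v\in G(I)\}$. The rooted list $\mathcal R(P_m)$ is defined recursively: $\mathcal R(P_1)$ empty; $\mathcal R(P_2)=x_1,x_2$; $\mathcal R(P_3)=x_2,x_1x_3$; $\mathcal R(P_4)=x_1x_3,x_2x_3,x_2x_4$; for $m\geq5$, if $\mathcal R(P_{m-2})=u_1,\ldots,u_r$ and $\mathcal R(P_{m-3})=v_1,\ldots,v_s$, then $\mathcal R(P_m)=x_{m-1}u_1,\ldots,x_{m-1}u_r,x_mx_{m-2}v_1,\ldots,x_mx_{m-2}v_s$; it lists each element of $G(J(P_m))$ once, and $w_i>_{\mathcal R}w_j$ iff $w_i$ precedes $w_j$. With $\mathcal R(P_m)=u_1,\ldots,u_q$, each $M\in F(J(P_m)^2)$ can be written $u_1^{a_1}\cdots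 u_q^{a_q}$ with $a_i\geq0$, $\sum a_i=2$; the maximal expression of $M$ is the one with lexicographically largest exponent vector $(a_1,\ldots,a_q)$. "The expression $u_iu_j$ is maximal" means the exponent vector $e_i+e_j$ is that of the maximal expression of the monomial $u_iu_j$. *)

theory Defs
  imports Main "HOL-Library.Multiset"
begin

text \<open>Monomials in K[x_1,...,x_n] are represented by their multisets of variable
indices (x_i corresponds to index i); product = multiset sum, divisibility = subset_mset.\<close>

type_synonym monomial = "nat multiset"

definition is_vertex_cover_path :: "nat \<Rightarrow> nat set \<Rightarrow> bool" where
  "is_vertex_cover_path m C \<longleftrightarrow> C \<subseteq> {1..m} \<and> (\<forall>i. 1 \<le> i \<and> i < m \<longrightarrow> i \<in> C \<or> Suc i \<in> C)"

definition is_min_vertex_cover_path :: "nat \<Rightarrow> nat set \<Rightarrow> bool" where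
  "is_min_vertex_cover_path m C \<longleftrightarrow> is_vertex_cover_path m C \<and>
     (\<forall>D. D \<subset> C \<longrightarrow> \<not> is_vertex_cover_path m D)"

definition cover_gens :: "nat \<Rightarrow> monomial set" where
  "cover_gens m = {mset_set C | C. is_min_vertex_cover_path m C}"

definition F2 :: "monomial set \<Rightarrow> monomial set" where
  "F2 G = {u + v | u v. u \<in> G \<and> v \<in> G}"

definition in_mideal :: "monomial set \<Rightarrow> monomial \<Rightarrow> bool" where
  "in_mideal gens w \<longleftrightarrow> (\<exists>g\<in>gens. g \<subseteq># w)"

definition min_gens :: "monomial set \<Rightarrow> monomial set" where
  "min_gens gens = {w. in_mideal gens w \<and> (\<forall>w'. in_mideal gens w' \<and> w' \<subseteq># w \<longrightarrow> w' = w)}"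

fun rooted :: "nat \<Rightarrow> monomial list" where
  "rooted 0 = []"
| "rooted (Suc 0) = []"
| "rooted (Suc (Suc 0)) = [{#1#}, {#2#}]"
| "rooted (Suc (Suc (Suc 0))) = [{#2#}, {#1, 3#}]"
| "rooted (Suc (Suc (Suc (Suc 0)))) = [{#1, 3#}, {#2, 3#}, {#2, 4#}]"
| "rooted (Suc (Suc (Suc (Suc (Suc m))))) =
     map (\<lambda>u. add_mset (m + 4) u) (rooted (m + 3)) @
     map (\<lambda>v. {#m + 5, m + 3#} + v) (rooted (m + 2))"

definition expvec :: "nat \<Rightarrow> nat \<Rightarrow> nat \<Rightarrow> nat list" where
  "expvec k a b = map (\<lambda>l. (if l = a then 1 else 0) + (if l = b then 1 else 0)) [1..<Suc k]"

definition lex_gt :: "nat list \<Rightarrow> nat list \<Rightarrow> bool" where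
  "lex_gt xs ys \<longleftrightarrow> (ys, xs) \<in> lexord {(a, b). a < b}"

definition is_max_expr :: "nat \<Rightarrow> nat \<Rightarrow> nat \<Rightarrow> bool" where
  "is_max_expr n i j \<longleftrightarrow>
     (let u = (\<lambda>l. rooted n ! (l - 1)); k = length (rooted n) in
      \<forall>a b. 1 \<le> a \<and> a \<le> k \<and> 1 \<le> b \<and> b \<le> k \<and> u a + u b = u i + u j \<longrightarrow>
            \<not> lex_gt (expvec k a b) (expvec k i j))"

end

theory Submission
  imports Defs
begin

definition val :: "nat set \<Rightarrow> nat" where "val C = (\<Sum>x\<in>C. 2^x)"

lemma val_bound: "S \<subseteq> {..<m} \<Longrightarrow> val S < 2^m"
proof -
  assume S: "S \<subseteq> {..<m}"
  have "val S \<le> (\<Sum>x\<in>{..<m}. (2::nat)^x)" unfolding val_def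
    by (rule sum_mono2) (use S in auto)
  also have "\<dots> = 2^m - 1" using sum_power2[of m] by (simp add: atLeast0LessThan)
  finally have le: "val S \<le> 2^m - 1" .
  have pos: "(0::nat) < 2^m" by simp
  show ?thesis using le pos by arith
qed

lemma val_split: "finite A \<Longrightarrow> finite C \<Longrightarrow> val A = val (A \<inter> C) + val (A - C)"
proof -
  assume f: "finite A"
  have "A = (A \<inter> C) \<union> (A - C)" by auto
  then have "val A = val ((A \<inter> C) \<union> (A - C))" by simp
  also have "\<dots> = val (A \<inter> C) + val (A - C)" unfolding val_def
    by (rule sum.union_disjoint) (use f in auto)
  finally show ?thesis .
qed

lemma val_less:
  assumes "finite A" "finite C" "m \<in> A - C" "\<forall>x\<in>C - A. x < m"
  shows "val C < val A"
proof -
  have "val (C - A) < 2^m" using assms(4) by (intro val_bound) auto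
  also have "2^m \<le> val (A - C)" unfolding val_def
    by (rule member_le_sum) (use assms(1,3) in auto)
  finally have "val (C - A) < val (A - C)" .
  then show ?thesis using val_split[OF assms(1,2)] val_split[OF assms(2,1)]
    by (simp add: Int_commute)
qed

lemma val_mono: "finite A \<Longrightarrow> C \<subseteq> A \<Longrightarrow> val C \<le> val A"
  unfolding val_def by (rule sum_mono2) auto

lemma val_less_D:
  assumes "finite A" "finite C" "val C < val A"
  shows "\<exists>m\<in>A - C. \<forall>x\<in>C - A. x < m"
proof (rule ccontr)
  assume H: "\<not> ?thesis"
  show False
  proof (cases "A - C = {}")
    case True
    then have "A \<subseteq> C" by auto
    then show False using val_mono[OF assms(2) \<open>A \<subseteq> C\<close>] assms(3) by simp
  next
    case False
    define m where "m = Max (A - C)"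
    have m1: "m \<in> A - C" unfolding m_def by (rule Max_in) (use False assms(1) in auto)
    have m2: "\<forall>y\<in>A - C. y \<le> m" unfolding m_def using assms(1) by (auto intro: Max_ge)
    note m = m1 m2
    from H m(1) obtain x where x0: "x \<in> C - A" "\<not> x < m" by blast
    then have x: "x \<in> C - A" "x \<ge> m" by auto
    define M where "M = Max (C - A)"
    have M1: "M \<in> C - A" unfolding M_def by (rule Max_in) (use x assms(2) in auto)
    have M2: "M \<ge> x" unfolding M_def using x assms(2) by (auto intro: Max_ge)
    note M = M1 M2
    have "\<forall>y\<in>A - C. y < M"
    proof
      fix y assume y: "y \<in> A - C"
      then have "y \<le> m" using m by blast
      moreover have "y \<noteq> M" using y M by blast
      ultimately show "y < M" using x M by linarith
    qed
    then have "val A < val C" using val_less[OF assms(2,1) M(1)] by blast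
    then show False using assms(3) by simp
  qed
qed

lemma mc_char:
  "is_min_vertex_cover_path n C \<longleftrightarrow> is_vertex_cover_path n C \<and>
     (\<forall>x\<in>C. (2 \<le> x \<and> x - 1 \<notin> C) \<or> (x + 1 \<le> n \<and> x + 1 \<notin> C))"
proof
  assume H: "is_min_vertex_cover_path n C"
  then have cov: "is_vertex_cover_path n C" by (simp add: is_min_vertex_cover_path_def)
  show "is_vertex_cover_path n C \<and> (\<forall>x\<in>C. (2 \<le> x \<and> x - 1 \<notin> C) \<or> (x + 1 \<le> n \<and> x + 1 \<notin> C))"
  proof (intro conjI ballI cov)
    fix x assume x: "x \<in> C"
    have "C - {x} \<subset> C" using x by auto
    then have "\<not> is_vertex_cover_path n (C - {x})" using H by (simp add: is_min_vertex_cover_path_def)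
    then obtain i where i: "1 \<le> i" "i < n" "i \<notin> C - {x}" "Suc i \<notin> C - {x}"
      using cov unfolding is_vertex_cover_path_def by auto
    have "i \<in> C \<or> Suc i \<in> C" using cov i unfolding is_vertex_cover_path_def by auto
    then show "(2 \<le> x \<and> x - 1 \<notin> C) \<or> (x + 1 \<le> n \<and> x + 1 \<notin> C)"
      using i by (cases "i = x") auto
  qed
next
  assume H: "is_vertex_cover_path n C \<and> (\<forall>x\<in>C. (2 \<le> x \<and> x - 1 \<notin> C) \<or> (x + 1 \<le> n \<and> x + 1 \<notin> C))"
  show "is_min_vertex_cover_path n C" unfolding is_min_vertex_cover_path_def
  proof (intro conjI allI impI)
    show "is_vertex_cover_path n C" using H by simp
    fix D assume D: "D \<subset> C"
    then obtain x where x: "x \<in> C" "x \<notin> D" by auto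
    have xn: "1 \<le> x" "x \<le> n" using H x unfolding is_vertex_cover_path_def by auto
    show "\<not> is_vertex_cover_path n D"
    proof
      assume cD: "is_vertex_cover_path n D"
      from H x have "(2 \<le> x \<and> x - 1 \<notin> C) \<or> (x + 1 \<le> n \<and> x + 1 \<notin> C)" by blast
      then show False
      proof
        assume a: "2 \<le> x \<and> x - 1 \<notin> C"
        have "1 \<le> x - 1" "x - 1 < n" using a xn by auto
        then have "x - 1 \<in> D \<or> Suc (x - 1) \<in> D" using cD unfolding is_vertex_cover_path_def by blast
        then show False using a x D by auto
      next
        assume a: "x + 1 \<le> n \<and> x + 1 \<notin> C"
        then have "x \<in> D \<or> Suc x \<in> D" using cD xn unfolding is_vertex_cover_path_def by auto
        then show False using a x D by auto
      qed
    qed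
  qed
qed

lemma val_insert: "finite S \<Longrightarrow> a \<notin> S \<Longrightarrow> val (insert a S) = 2^a + val S"
  unfolding val_def by simp

lemma cover_sub: "is_vertex_cover_path n C \<Longrightarrow> C \<subseteq> {1..n}"
  by (simp add: is_vertex_cover_path_def)

lemma mc_cover: "is_min_vertex_cover_path n C \<Longrightarrow> is_vertex_cover_path n C"
  by (simp add: is_min_vertex_cover_path_def)

lemma mc_fin: "is_min_vertex_cover_path n C \<Longrightarrow> finite C"
proof -
  assume "is_min_vertex_cover_path n C"
  then have "C \<subseteq> {1..n}" using mc_cover cover_sub by blast
  then show ?thesis by (rule finite_subset) simp
qed

lemma step_X:
  assumes "is_min_vertex_cover_path (m+3) C0"
  shows "is_min_vertex_cover_path (m+5) (insert (m+4) C0)"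
proof -
  have c: "is_vertex_cover_path (m+3) C0" and l: "\<forall>x\<in>C0. (2 \<le> x \<and> x - 1 \<notin> C0) \<or> (x + 1 \<le> m+3 \<and> x + 1 \<notin> C0)"
    using assms by (auto simp: mc_char)
  have sub: "C0 \<subseteq> {1..m+3}" using c by (simp add: is_vertex_cover_path_def)
  have cov: "is_vertex_cover_path (m+5) (insert (m+4) C0)"
    unfolding is_vertex_cover_path_def
  proof (intro conjI allI impI)
    show "insert (m + 4) C0 \<subseteq> {1..m + 5}" using sub by auto
    fix i assume i: "1 \<le> i \<and> i < m + 5"
    show "i \<in> insert (m + 4) C0 \<or> Suc i \<in> insert (m + 4) C0"
    proof (cases "i < m + 3")
      case True
      have "\<forall>i. 1 \<le> i \<and> i < m + 3 \<longrightarrow> i \<in> C0 \<or> Suc i \<in> C0" using c unfolding is_vertex_cover_path_def by blast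
      then have "i \<in> C0 \<or> Suc i \<in> C0" using True i by blast
      then show ?thesis by blast
    next
      case False then show ?thesis using i by auto
    qed
  qed
  show ?thesis unfolding mc_char
  proof (intro conjI cov ballI)
    fix x assume x: "x \<in> insert (m+4) C0"
    show "(2 \<le> x \<and> x - 1 \<notin> insert (m+4) C0) \<or> (x + 1 \<le> m+5 \<and> x + 1 \<notin> insert (m+4) C0)"
    proof (cases "x = m + 4")
      case True then show ?thesis using sub by auto
    next
      case False
      then have x0: "x \<in> C0" using x by auto
      then have xl: "x \<le> m + 3" using sub by auto
      from l x0 have "(2 \<le> x \<and> x - 1 \<notin> C0) \<or> (x + 1 \<le> m + 3 \<and> x + 1 \<notin> C0)" by blast
      then show ?thesis using xl by auto
    qed
  qed
qed

lemma step_Y: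
  assumes "is_min_vertex_cover_path (m+2) C0"
  shows "is_min_vertex_cover_path (m+5) (insert (m+5) (insert (m+3) C0))"
proof -
  have c: "is_vertex_cover_path (m+2) C0" and l: "\<forall>x\<in>C0. (2 \<le> x \<and> x - 1 \<notin> C0) \<or> (x + 1 \<le> m+2 \<and> x + 1 \<notin> C0)"
    using assms by (auto simp: mc_char)
  have sub: "C0 \<subseteq> {1..m+2}" using c by (simp add: is_vertex_cover_path_def)
  have cov: "is_vertex_cover_path (m+5) (insert (m+5) (insert (m+3) C0))"
    unfolding is_vertex_cover_path_def
  proof (intro conjI allI impI)
    show "insert (m+5) (insert (m + 3) C0) \<subseteq> {1..m + 5}" using sub by auto
    fix i assume i: "1 \<le> i \<and> i < m + 5"
    show "i \<in> insert (m+5) (insert (m + 3) C0) \<or> Suc i \<in> insert (m+5) (insert (m + 3) C0)"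
    proof (cases "i < m + 2")
      case True
      have "\<forall>i. 1 \<le> i \<and> i < m + 2 \<longrightarrow> i \<in> C0 \<or> Suc i \<in> C0" using c unfolding is_vertex_cover_path_def by blast
      then have "i \<in> C0 \<or> Suc i \<in> C0" using True i by blast
      then show ?thesis by blast
    next
      case False then show ?thesis using i by auto
    qed
  qed
  show ?thesis unfolding mc_char
  proof (intro conjI cov ballI)
    fix x assume x: "x \<in> insert (m+5) (insert (m+3) C0)"
    show "(2 \<le> x \<and> x - 1 \<notin> insert (m+5) (insert (m+3) C0)) \<or> (x + 1 \<le> m+5 \<and> x + 1 \<notin> insert (m+5) (insert (m+3) C0))"
    proof (cases "x = m + 5 \<or> x = m + 3")
      case True then show ?thesis using sub by auto
    next
      case False
      then have x0: "x \<in> C0" using x by auto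
      then have xl: "x \<le> m + 2" using sub by auto
      from l x0 have "(2 \<le> x \<and> x - 1 \<notin> C0) \<or> (x + 1 \<le> m + 2 \<and> x + 1 \<notin> C0)" by blast
      then show ?thesis using xl by auto
    qed
  qed
qed

definition vlt :: "nat multiset \<Rightarrow> nat multiset \<Rightarrow> bool" where
  "vlt u w \<longleftrightarrow> val (set_mset u) < val (set_mset w)"

definition sound :: "nat \<Rightarrow> bool" where
  "sound n \<longleftrightarrow> (\<forall>u\<in>set (rooted n). \<exists>C. u = mset_set C \<and> is_min_vertex_cover_path n C)"

lemma vals: "val {1} = 2" "val {2} = 4" "val {1,3} = 10" "val {2,3} = 12" "val {2,4} = 20"
  by (simp_all add: val_def)
lemma base2: "is_min_vertex_cover_path 2 {1}" "is_min_vertex_cover_path 2 {2}"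
    unfolding mc_char is_vertex_cover_path_def by auto
lemma base3: "is_min_vertex_cover_path 3 {2}" "is_min_vertex_cover_path 3 {1,3}"
    unfolding mc_char is_vertex_cover_path_def by auto
lemma base4: "is_min_vertex_cover_path 4 {1,3}" "is_min_vertex_cover_path 4 {2,3}" "is_min_vertex_cover_path 4 {2,4}"
    unfolding mc_char is_vertex_cover_path_def by auto
lemma ms: "{#1#} = mset_set {1::nat}" "{#2#} = mset_set {2::nat}" "{#1,3#} = mset_set {1::nat,3}"
   "{#2,3#} = mset_set {2::nat,3}" "{#2,4#} = mset_set {2::nat,4}" by simp_all

lemma r2: "rooted 2 = [{#1#},{#2#}]" by (simp add: numeral_2_eq_2)
lemma r3: "rooted 3 = [{#2#},{#1,3#}]" by (simp add: numeral_3_eq_3)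
lemma r4: "rooted 4 = [{#1,3#},{#2,3#},{#2,4#}]"
  by (simp add: eval_nat_numeral)
lemma r5: "rooted (m+5) = map (\<lambda>u. add_mset (m + 4) u) (rooted (m + 3)) @
     map (\<lambda>v. {#m + 5, m + 3#} + v) (rooted (m + 2))"
proof -
  have "m + 5 = Suc (Suc (Suc (Suc (Suc m))))" by simp
  then show ?thesis by (simp only: rooted.simps)
qed

lemma s2: "sound 2 \<and> sorted_wrt vlt (rooted 2)"
proof -
  have "\<exists>C. {#1#} = mset_set C \<and> is_min_vertex_cover_path 2 C" using base2 ms by blast
  moreover have "\<exists>C. {#2#} = mset_set C \<and> is_min_vertex_cover_path 2 C" using base2 ms by blast
  moreover have "vlt {#1#} {#2#}" unfolding vlt_def using vals by simp
  ultimately show ?thesis unfolding sound_def r2 by simp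
qed
lemma s3: "sound 3 \<and> sorted_wrt vlt (rooted 3)"
proof -
  have "\<exists>C. {#2#} = mset_set C \<and> is_min_vertex_cover_path 3 C" using base3 ms by blast
  moreover have "\<exists>C. {#1,3#} = mset_set C \<and> is_min_vertex_cover_path 3 C" using base3 ms by blast
  moreover have "vlt {#2#} {#1,3#}" unfolding vlt_def using vals by simp
  ultimately show ?thesis unfolding sound_def r3 by simp
qed
lemma s4: "sound 4 \<and> sorted_wrt vlt (rooted 4)"
proof -
  have "\<exists>C. {#1,3#} = mset_set C \<and> is_min_vertex_cover_path 4 C" using base4 ms by blast
  moreover have "\<exists>C. {#2,3#} = mset_set C \<and> is_min_vertex_cover_path 4 C" using base4 ms by blast
  moreover have "\<exists>C. {#2,4#} = mset_set C \<and> is_min_vertex_cover_path 4 C" using base4 ms by blast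
  moreover have "vlt {#1,3#} {#2,3#}" "vlt {#1,3#} {#2,4#}" "vlt {#2,3#} {#2,4#}"
    unfolding vlt_def using vals by simp_all
  ultimately show ?thesis unfolding sound_def r4 by simp
qed


lemma sound_step:
  assumes h1: "sound (m+3)" "sorted_wrt vlt (rooted (m+3))"
      and h2: "sound (m+2)" "sorted_wrt vlt (rooted (m+2))"
  shows "sound (m+5) \<and> sorted_wrt vlt (rooted (m+5))"
proof -
  have X: "\<exists>C. add_mset (m+4) w = mset_set C \<and> is_min_vertex_cover_path (m+5) C
              \<and> val C = 2^(m+4) + val (set_mset w) \<and> val C < 2^(m+5)"
    if w: "w \<in> set (rooted (m+3))" for w
  proof -
    obtain C0 where C0: "w = mset_set C0" "is_min_vertex_cover_path (m+3) C0"
      using h1(1) w unfolding sound_def by blast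
    have sub: "C0 \<subseteq> {1..m+3}" using C0(2) mc_cover cover_sub by blast
    have fin: "finite C0" using C0(2) mc_fin by blast
    have nin: "m + 4 \<notin> C0" using sub by auto
    have e: "add_mset (m+4) w = mset_set (insert (m+4) C0)" using C0(1) fin nin by simp
    have v: "val (insert (m+4) C0) = 2^(m+4) + val (set_mset w)"
      using val_insert[OF fin nin] C0(1) fin by simp
    have "val C0 < 2^(m+4)" using sub by (intro val_bound) auto
    moreover have "(2::nat)^(m+5) = 2^(m+4) + 2^(m+4)" by (simp add: power_add)
    ultimately have "val (insert (m+4) C0) < 2^(m+5)" using val_insert[OF fin nin] by simp
    then show ?thesis using e v step_X[OF C0(2)] by blast
  qed
  have Y: "\<exists>C. {#m + 5, m + 3#} + w = mset_set C \<and> is_min_vertex_cover_path (m+5) C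
              \<and> val C = 2^(m+5) + 2^(m+3) + val (set_mset w)"
    if w: "w \<in> set (rooted (m+2))" for w
  proof -
    obtain C0 where C0: "w = mset_set C0" "is_min_vertex_cover_path (m+2) C0"
      using h2(1) w unfolding sound_def by blast
    have sub: "C0 \<subseteq> {1..m+2}" using C0(2) mc_cover cover_sub by blast
    have fin: "finite C0" using C0(2) mc_fin by blast
    have nin: "m + 3 \<notin> C0" "m + 5 \<notin> insert (m+3) C0" using sub by auto
    have e: "{#m + 5, m + 3#} + w = mset_set (insert (m+5) (insert (m+3) C0))" using C0(1) fin nin by simp
    have v: "val (insert (m+5) (insert (m+3) C0)) = 2^(m+5) + 2^(m+3) + val (set_mset w)"
      using val_insert[OF fin nin(1)] val_insert[of "insert (m+3) C0", OF _ nin(2)] C0(1) fin by simp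
    then show ?thesis using e v step_Y[OF C0(2)] by blast
  qed
  have snd: "sound (m+5)" unfolding sound_def r5
  proof
    fix u assume "u \<in> set (map (add_mset (m + 4)) (rooted (m + 3)) @ map ((+) {#m + 5, m + 3#}) (rooted (m + 2)))"
    then have "(\<exists>w\<in>set (rooted (m+3)). u = add_mset (m+4) w) \<or> (\<exists>w\<in>set (rooted (m+2)). u = {#m + 5, m + 3#} + w)"
      by auto
    then show "\<exists>C. u = mset_set C \<and> is_min_vertex_cover_path (m + 5) C"
    proof
      assume "\<exists>w\<in>set (rooted (m+3)). u = add_mset (m+4) w"
      then obtain w where "w\<in>set (rooted (m+3))" "u = add_mset (m+4) w" by blast
      then show ?thesis using X by blast
    next
      assume "\<exists>w\<in>set (rooted (m+2)). u = {#m + 5, m + 3#} + w"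
      then obtain w where "w\<in>set (rooted (m+2))" "u = {#m + 5, m + 3#} + w" by blast
      then show ?thesis using Y by blast
    qed
  qed
  have vX: "val (insert (m+4) (set_mset w)) = 2^(m+4) + val (set_mset w)"
       "val (insert (m+4) (set_mset w)) < 2^(m+5)" if ww: "w \<in> set (rooted (m+3))" for w
  proof -
    obtain C where "add_mset (m+4) w = mset_set C" "is_min_vertex_cover_path (m+5) C"
              "val C = 2^(m+4) + val (set_mset w)" "val C < 2^(m+5)" using X[OF ww] by blast
    moreover have "finite C" using mc_fin calculation(2) by blast
    ultimately have "insert (m+4) (set_mset w) = C" by (metis finite_set_mset_mset_set set_mset_add_mset_insert)
    then show "val (insert (m+4) (set_mset w)) = 2^(m+4) + val (set_mset w)"
       "val (insert (m+4) (set_mset w)) < 2^(m+5)" using \<open>val C = 2^(m+4) + val (set_mset w)\<close> \<open>val C < 2^(m+5)\<close> by simp_all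
  qed
  have vY: "val (insert (m+5) (insert (m+3) (set_mset w))) = 2^(m+5) + 2^(m+3) + val (set_mset w)"
     if ww: "w \<in> set (rooted (m+2))" for w
  proof -
    obtain C where "{#m + 5, m + 3#} + w = mset_set C" "is_min_vertex_cover_path (m+5) C"
              "val C = 2^(m+5) + 2^(m+3) + val (set_mset w)" using Y[OF ww] by blast
    moreover have "finite C" using mc_fin calculation(2) by blast
    ultimately have "insert (m+5) (insert (m+3) (set_mset w)) = C" by (metis finite_set_mset_mset_set set_mset_add_mset_insert set_mset_union set_mset_empty Un_insert_left Un_empty_left)
    then show ?thesis using \<open>val C = 2^(m+5) + 2^(m+3) + val (set_mset w)\<close> by simp
  qed
  have so1: "sorted_wrt vlt (map (add_mset (m + 4)) (rooted (m + 3)))"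
    unfolding sorted_wrt_map
    by (rule sorted_wrt_mono_rel[OF _ h1(2)]) (simp add: vlt_def vX)
  have so2: "sorted_wrt vlt (map ((+) {#m + 5, m + 3#}) (rooted (m + 2)))"
    unfolding sorted_wrt_map
  proof (rule sorted_wrt_mono_rel[OF _ h2(2)])
    fix x y assume "x \<in> set (rooted (m+2))" "y \<in> set (rooted (m+2))" "vlt x y"
    then show "vlt ({#m + 5, m + 3#} + x) ({#m + 5, m + 3#} + y)"
      using vY[of x] vY[of y] unfolding vlt_def by simp
  qed
  have so3: "\<forall>x\<in>set (map (add_mset (m + 4)) (rooted (m + 3))). \<forall>y\<in>set (map ((+) {#m + 5, m + 3#}) (rooted (m + 2))). vlt x y"
  proof (intro ballI)
    fix x y assume x: "x \<in> set (map (add_mset (m + 4)) (rooted (m + 3)))" and y: "y \<in> set (map ((+) {#m + 5, m + 3#}) (rooted (m + 2)))"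
    from x obtain w where w: "w \<in> set (rooted (m+3))" "x = add_mset (m+4) w" by auto
    from y obtain w' where w': "w' \<in> set (rooted (m+2))" "y = {#m + 5, m + 3#} + w'" by auto
    have "val (set_mset x) < 2^(m+5)" using vX(2)[OF w(1)] w(2) by simp
    moreover have "val (set_mset y) \<ge> 2^(m+5)" using vY[OF w'(1)] w'(2) by simp
    ultimately show "vlt x y" unfolding vlt_def by linarith
  qed
  show ?thesis using snd so1 so2 so3 unfolding r5 sorted_wrt_append by blast
qed

lemma rooted_sound_all: "n \<ge> 2 \<Longrightarrow> sound n \<and> sorted_wrt vlt (rooted n)"
proof (induction n rule: less_induct)
  case (less n)
  show ?case
  proof (cases "n \<le> 4")
    case True
    then have "n = 2 \<or> n = 3 \<or> n = 4" using less.prems by auto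
    then show ?thesis using s2 s3 s4 by blast
  next
    case False
    define m where "m = n - 5"
    have m: "n = m + 5" using False unfolding m_def by simp
    have "sound (m+3) \<and> sorted_wrt vlt (rooted (m+3))" using less.IH m by simp
    moreover have "sound (m+2) \<and> sorted_wrt vlt (rooted (m+2))" using less.IH m by simp
    ultimately show ?thesis using sound_step m by blast
  qed
qed

lemma mc_edge: "is_min_vertex_cover_path n C \<Longrightarrow> 1 \<le> i \<Longrightarrow> i < n \<Longrightarrow> i \<in> C \<or> Suc i \<in> C"
  unfolding mc_char is_vertex_cover_path_def by blast
lemma mc_loc: "is_min_vertex_cover_path n C \<Longrightarrow> x \<in> C \<Longrightarrow> (2 \<le> x \<and> x - 1 \<notin> C) \<or> (x + 1 \<le> n \<and> x + 1 \<notin> C)"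
  unfolding mc_char by blast
lemma mc_sub: "is_min_vertex_cover_path n C \<Longrightarrow> C \<subseteq> {1..n}"
  using mc_cover cover_sub by blast

lemma c2: assumes "is_min_vertex_cover_path 2 C" shows "mset_set C \<in> set (rooted 2)"
proof -
  have sub: "C \<subseteq> {1,2}" using mc_sub[OF assms] by auto
  have e1: "1 \<in> C \<or> 2 \<in> C" using mc_edge[OF assms, of 1] by (simp add: numeral_2_eq_2)
  have l1: "1 \<in> C \<Longrightarrow> 2 \<notin> C" using mc_loc[OF assms, of 1] by (simp add: numeral_2_eq_2)
  have "C = {1} \<or> C = {2}" using sub e1 l1 by blast
  then show ?thesis by (auto simp: r2)
qed

lemma c3: assumes "is_min_vertex_cover_path 3 C" shows "mset_set C \<in> set (rooted 3)"
proof -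
  have sub: "C \<subseteq> {1,2,3}" using mc_sub[OF assms] by auto
  have e1: "1 \<in> C \<or> 2 \<in> C" using mc_edge[OF assms, of 1] by (simp add: numeral_2_eq_2)
  have e2: "2 \<in> C \<or> 3 \<in> C" using mc_edge[OF assms, of 2] by simp
  have l1: "1 \<in> C \<Longrightarrow> 2 \<notin> C" using mc_loc[OF assms, of 1] by (simp add: numeral_2_eq_2)
  have l2: "2 \<in> C \<Longrightarrow> 1 \<notin> C \<or> 3 \<notin> C" using mc_loc[OF assms, of 2] by simp
  have l3: "3 \<in> C \<Longrightarrow> 2 \<notin> C" using mc_loc[OF assms, of 3] by simp
  have "C = {2} \<or> C = {1,3}" using sub e1 e2 l1 l2 l3 by blast
  then show ?thesis by (auto simp: r3)
qed

lemma c4: assumes "is_min_vertex_cover_path 4 C" shows "mset_set C \<in> set (rooted 4)"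
proof -
  have sub: "C \<subseteq> {1,2,3,4}" using mc_sub[OF assms] by auto
  have e1: "1 \<in> C \<or> 2 \<in> C" using mc_edge[OF assms, of 1] by (simp add: numeral_2_eq_2)
  have e2: "2 \<in> C \<or> 3 \<in> C" using mc_edge[OF assms, of 2] by simp
  have e3: "3 \<in> C \<or> 4 \<in> C" using mc_edge[OF assms, of 3] by simp
  have l1: "1 \<in> C \<Longrightarrow> 2 \<notin> C" using mc_loc[OF assms, of 1] by (simp add: numeral_2_eq_2)
  have l2: "2 \<in> C \<Longrightarrow> 1 \<notin> C \<or> 3 \<notin> C" using mc_loc[OF assms, of 2] by simp
  have l3: "3 \<in> C \<Longrightarrow> 2 \<notin> C \<or> 4 \<notin> C" using mc_loc[OF assms, of 3] by simp
  have l4: "4 \<in> C \<Longrightarrow> 3 \<notin> C" using mc_loc[OF assms, of 4] by simp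
  have "C = {1,3} \<or> C = {2,3} \<or> C = {2,4}" using sub e1 e2 e3 l1 l2 l3 l4 by blast
  then show ?thesis by (auto simp: r4)
qed


lemma complete_step:
  assumes IH3: "\<And>C. is_min_vertex_cover_path (m+3) C \<Longrightarrow> mset_set C \<in> set (rooted (m+3))"
    and IH2: "\<And>C. is_min_vertex_cover_path (m+2) C \<Longrightarrow> mset_set C \<in> set (rooted (m+2))"
    and C: "is_min_vertex_cover_path (m+5) C"
  shows "mset_set C \<in> set (rooted (m+5))"
proof -
  have subC: "C \<subseteq> {1..m+5}" using mc_sub[OF C] .
  have finC: "finite C" using mc_fin[OF C] .
  show ?thesis
  proof (cases "m+4 \<in> C")
    case True
    have n5: "m+5 \<notin> C"
    proof
      assume "m+5 \<in> C"
      from mc_loc[OF C this] True show False by (simp add: add.commute)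
    qed
    define C0 where "C0 = C - {m+4}"
    have sub: "C0 \<subseteq> {1..m+3}"
    proof
      fix x assume x: "x \<in> C0"
      then have xC: "x \<in> C" and "x \<noteq> m+4" unfolding C0_def by auto
      moreover have "x \<noteq> m+5" using n5 xC by auto
      moreover have "x \<in> {1..m+5}" using subC xC by blast
      ultimately show "x \<in> {1..m+3}" by auto
    qed
    have cov: "is_vertex_cover_path (m+3) C0" unfolding is_vertex_cover_path_def
    proof (intro conjI sub allI impI)
      fix i assume i: "1 \<le> i \<and> i < m + 3"
      then have "i \<in> C \<or> Suc i \<in> C" using mc_edge[OF C, of i] by simp
      then show "i \<in> C0 \<or> Suc i \<in> C0" using i unfolding C0_def by auto
    qed
    have mc0: "is_min_vertex_cover_path (m+3) C0" unfolding mc_char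
    proof (intro conjI cov ballI)
      fix x assume x: "x \<in> C0"
      then have xC: "x \<in> C" and xl: "x \<le> m+3" using sub unfolding C0_def by auto
      from mc_loc[OF C xC] show "(2 \<le> x \<and> x - 1 \<notin> C0) \<or> (x + 1 \<le> m+3 \<and> x + 1 \<notin> C0)"
      proof
        assume "2 \<le> x \<and> x - 1 \<notin> C" then show ?thesis unfolding C0_def by auto
      next
        assume a: "x + 1 \<le> m+5 \<and> x + 1 \<notin> C"
        then have "x + 1 \<noteq> m + 4" using True by (auto simp: add.commute)
        then show ?thesis using a xl unfolding C0_def by auto
      qed
    qed
    have fin0: "finite C0" using finC unfolding C0_def by simp
    have eq: "C = insert (m+4) C0" using True unfolding C0_def by auto
    have nin0: "m+4 \<notin> C0" by (simp add: C0_def)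
    have "mset_set C = add_mset (m+4) (mset_set C0)" unfolding eq using fin0 nin0 by simp
    moreover have "mset_set C0 \<in> set (rooted (m+3))" using IH3[OF mc0] .
    ultimately show ?thesis unfolding r5 by simp
  next
    case False
    have i5: "m+5 \<in> C" using mc_edge[OF C, of "m+4"] False by (simp add: add.commute)
    have i3: "m+3 \<in> C" using mc_edge[OF C, of "m+3"] False by (simp add: add.commute)
    define C0 where "C0 = C - {m+3, m+5}"
    have sub: "C0 \<subseteq> {1..m+2}"
    proof
      fix x assume x: "x \<in> C0"
      then have xC: "x \<in> C" and "x \<noteq> m+3" "x \<noteq> m+5" unfolding C0_def by auto
      moreover have "x \<noteq> m+4" using False xC by auto
      moreover have "x \<in> {1..m+5}" using subC xC by blast
      ultimately show "x \<in> {1..m+2}" by auto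
    qed
    have cov: "is_vertex_cover_path (m+2) C0" unfolding is_vertex_cover_path_def
    proof (intro conjI sub allI impI)
      fix i assume i: "1 \<le> i \<and> i < m + 2"
      then have "i \<in> C \<or> Suc i \<in> C" using mc_edge[OF C, of i] by simp
      then show "i \<in> C0 \<or> Suc i \<in> C0" using i unfolding C0_def by auto
    qed
    have mc0: "is_min_vertex_cover_path (m+2) C0" unfolding mc_char
    proof (intro conjI cov ballI)
      fix x assume x: "x \<in> C0"
      then have xC: "x \<in> C" and xl: "x \<le> m+2" using sub unfolding C0_def by auto
      from mc_loc[OF C xC] show "(2 \<le> x \<and> x - 1 \<notin> C0) \<or> (x + 1 \<le> m+2 \<and> x + 1 \<notin> C0)"
      proof
        assume "2 \<le> x \<and> x - 1 \<notin> C" then show ?thesis unfolding C0_def by auto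
      next
        assume a: "x + 1 \<le> m+5 \<and> x + 1 \<notin> C"
        then have "x + 1 \<noteq> m + 3" using i3 a by metis
        then show ?thesis using a xl unfolding C0_def by auto
      qed
    qed
    have fin0: "finite C0" using finC unfolding C0_def by simp
    have eq: "C = insert (m+5) (insert (m+3) C0)" using i3 i5 unfolding C0_def by auto
    have nin0: "m+3 \<notin> C0" "m+5 \<notin> insert (m+3) C0" by (auto simp: C0_def)
    have "mset_set C = {#m+5, m+3#} + mset_set C0" unfolding eq using fin0 nin0 by simp
    moreover have "mset_set C0 \<in> set (rooted (m+2))" using IH2[OF mc0] .
    ultimately show ?thesis unfolding r5 by simp
  qed
qed

lemma rooted_complete: "n \<ge> 2 \<Longrightarrow> is_min_vertex_cover_path n C \<Longrightarrow> mset_set C \<in> set (rooted n)"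
proof (induction n arbitrary: C rule: less_induct)
  case (less n)
  show ?case
  proof (cases "n \<le> 4")
    case True
    then have "n = 2 \<or> n = 3 \<or> n = 4" using less.prems by auto
    then show ?thesis using c2 c3 c4 less.prems by blast
  next
    case False
    define m where "m = n - 5"
    have m: "n = m + 5" using False unfolding m_def by simp
    have "\<And>C. is_min_vertex_cover_path (m+3) C \<Longrightarrow> mset_set C \<in> set (rooted (m+3))"
      using less.IH m by simp
    moreover have "\<And>C. is_min_vertex_cover_path (m+2) C \<Longrightarrow> mset_set C \<in> set (rooted (m+2))"
      using less.IH m by simp
    ultimately show ?thesis using complete_step less.prems m by blast
  qed
qed

lemma cov_edge: "is_vertex_cover_path n C \<Longrightarrow> 1 \<le> i \<Longrightarrow> i < n \<Longrightarrow> i \<in> C \<or> Suc i \<in> C"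
  unfolding is_vertex_cover_path_def by blast

lemma main_comb:
  assumes A: "is_min_vertex_cover_path n A" and B: "is_vertex_cover_path n B" and v: "v \<in> B"
    and C: "is_vertex_cover_path n C" and CA: "C \<subseteq> insert v A" and vl: "val C < val A"
  shows "\<exists>E F. is_vertex_cover_path n E \<and> is_vertex_cover_path n F \<and> val E < val A \<and>
           mset_set E + mset_set F \<subseteq># mset_set A + mset_set B"
proof -
  have subA: "A \<subseteq> {1..n}" using mc_sub[OF A] .
  have subB: "B \<subseteq> {1..n}" using cover_sub[OF B] .
  have subC: "C \<subseteq> {1..n}" using cover_sub[OF C] .
  have finA: "finite A" using subA finite_subset by blast
  have finB: "finite B" using subB finite_subset by blast
  have finC: "finite C" using subC finite_subset by blast
  show ?thesis
  proof (cases "C \<subseteq> A")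
    case True
    have "mset_set C \<subseteq># mset_set A" using True finA finC by simp
    then have "mset_set C + mset_set B \<subseteq># mset_set A + mset_set B" by (rule subset_mset.add_right_mono)
    then show ?thesis using C B vl by blast
  next
    case False
    then have vC: "v \<in> C" and vA: "v \<notin> A" using CA by auto
    obtain m where m: "m \<in> A - C" "\<forall>x\<in>C - A. x < m" using val_less_D[OF finA finC vl] by blast
    have vm: "v < m" using m vC vA by blast
    have mn: "1 \<le> m" "m \<le> n" using m subA by auto
    have mv: "m = v + 1"
    proof -
      from mc_loc[OF A, of m] m(1) have "(2 \<le> m \<and> m - 1 \<notin> A) \<or> (m + 1 \<le> n \<and> m + 1 \<notin> A)" by blast
      then show ?thesis
      proof
        assume a: "2 \<le> m \<and> m - 1 \<notin> A"
        have "1 \<le> m - 1" "m - 1 < n" using a mn by auto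
        then have "m - 1 \<in> C \<or> Suc (m - 1) \<in> C" using cov_edge[OF C, of "m - 1"] by blast
        then have "m - 1 \<in> C \<or> m \<in> C" using a by simp
        then have "m - 1 \<in> C" using a m(1) by simp
        then have "m - 1 = v" using CA a by blast
        then show ?thesis using a by linarith
      next
        assume a: "m + 1 \<le> n \<and> m + 1 \<notin> A"
        have "m \<in> C \<or> Suc m \<in> C" using cov_edge[OF C, of m] a mn by simp
        then have "Suc m \<in> C" using m(1) by simp
        then have "Suc m = v" using CA a by auto
        then show ?thesis using vm by simp
      qed
    qed
    have v1A: "v + 1 \<in> A" and v1C: "v + 1 \<notin> C" using m mv by auto
    have v2: "v + 2 \<le> n \<Longrightarrow> v + 2 \<in> A"
    proof -
      assume a: "v + 2 \<le> n"
      have "v + 1 \<in> C \<or> Suc (v + 1) \<in> C" using cov_edge[OF C, of "v + 1"] a by simp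
      then have "v + 2 \<in> C" using v1C by simp
      then show "v + 2 \<in> A" using CA by auto
    qed
    have vn: "1 \<le> v" "v + 1 \<le> n" using v subB v1A subA by auto
    have vm1: "2 \<le> v \<Longrightarrow> v - 1 \<in> A"
    proof -
      assume a: "2 \<le> v"
      have "v - 1 \<in> A \<or> Suc (v - 1) \<in> A" using cov_edge[OF mc_cover[OF A], of "v - 1"] a vn by simp
      then show ?thesis using vA a by simp
    qed
    define E where "E = {x\<in>B. x < v} \<union> {v} \<union> {x\<in>A. v + 2 \<le> x}"
    define F where "F = {x\<in>A. x < v} \<union> {v + 1} \<union> {x\<in>B. v + 1 \<le> x}"
    have finE: "finite E" unfolding E_def using finA finB by simp
    have finF: "finite F" unfolding F_def using finA finB by simp
    have covE: "is_vertex_cover_path n E" unfolding is_vertex_cover_path_def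
    proof (intro conjI allI impI)
      show "E \<subseteq> {1..n}" unfolding E_def using subA subB vn by auto
      fix i assume i: "1 \<le> i \<and> i < n"
      have cB: "i \<in> B \<or> Suc i \<in> B" using cov_edge[OF B, of i] i by simp
      have cA: "i \<in> A \<or> Suc i \<in> A" using cov_edge[OF mc_cover[OF A], of i] i by simp
      consider "Suc i < v" | "Suc i = v" | "i = v" | "i = v + 1" | "v + 2 \<le> i" by linarith
      then show "i \<in> E \<or> Suc i \<in> E"
      proof cases
        case 1 then show ?thesis using cB unfolding E_def by auto
      next
        case 2 then show ?thesis unfolding E_def by auto
      next
        case 3 then show ?thesis unfolding E_def by auto
      next
        case 4 then have "v + 2 \<in> A" using v2 i by simp
          then show ?thesis using 4 unfolding E_def by auto
      next
        case 5 then show ?thesis using cA unfolding E_def by auto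
      qed
    qed
    have covF: "is_vertex_cover_path n F" unfolding is_vertex_cover_path_def
    proof (intro conjI allI impI)
      show "F \<subseteq> {1..n}" unfolding F_def using subA subB vn by auto
      fix i assume i: "1 \<le> i \<and> i < n"
      have cB: "i \<in> B \<or> Suc i \<in> B" using cov_edge[OF B, of i] i by simp
      have cA: "i \<in> A \<or> Suc i \<in> A" using cov_edge[OF mc_cover[OF A], of i] i by simp
      consider "Suc i < v" | "Suc i = v" | "i = v" | "i = v + 1" | "v + 2 \<le> i" by linarith
      then show "i \<in> F \<or> Suc i \<in> F"
      proof cases
        case 1 then show ?thesis using cA unfolding F_def by auto
      next
        case 2
          have "2 \<le> v" using 2 i by simp
          then have "v - 1 \<in> A" by (rule vm1)
          moreover have "i = v - 1" using 2 by simp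
          ultimately have "i \<in> A" by simp
          then show ?thesis using 2 unfolding F_def by auto
      next
        case 3 then show ?thesis unfolding F_def by auto
      next
        case 4 then show ?thesis unfolding F_def by auto
      next
        case 5 then show ?thesis using cB unfolding F_def by auto
      qed
    qed
    have valE: "val E < val A"
    proof (rule val_less[OF finA finE, of "v + 1"])
      show "v + 1 \<in> A - E" using v1A unfolding E_def by auto
      show "\<forall>x\<in>E - A. x < v + 1" unfolding E_def by auto
    qed
    have ms: "mset_set E + mset_set F \<subseteq># mset_set A + mset_set B"
      unfolding subseteq_mset_def
    proof
      fix x
      have cnt: "count (mset_set E + mset_set F) x = (if x \<in> E then 1 else 0) + (if x \<in> F then 1 else 0)"
                "count (mset_set A + mset_set B) x = (if x \<in> A then 1 else 0) + (if x \<in> B then 1 else 0)"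
        using finA finB finE finF by simp_all
      consider "x < v" | "x = v" | "x = v + 1" | "v + 2 \<le> x" by linarith
      then show "count (mset_set E + mset_set F) x \<le> count (mset_set A + mset_set B) x"
      proof cases
        case 1
        then have "x \<in> E \<longleftrightarrow> x \<in> B" "x \<in> F \<longleftrightarrow> x \<in> A" unfolding E_def F_def by auto
        then show ?thesis unfolding cnt by simp
      next
        case 2
        then have "x \<in> E" "x \<notin> F" "x \<notin> A" "x \<in> B" unfolding E_def F_def using vA v by auto
        then show ?thesis unfolding cnt by simp
      next
        case 3
        then have "x \<notin> E" "x \<in> F" "x \<in> A" unfolding E_def F_def using v1A by auto
        then show ?thesis unfolding cnt by simp
      next
        case 4
        then have "x \<in> E \<longleftrightarrow> x \<in> A" "x \<in> F \<longleftrightarrow> x \<in> B" unfolding E_def F_def by auto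
        then show ?thesis unfolding cnt by simp
      qed
    qed
    show ?thesis using covE covF valE ms by blast
  qed
qed

lemma sub_min: "is_vertex_cover_path n E \<Longrightarrow> \<exists>E'. E' \<subseteq> E \<and> is_min_vertex_cover_path n E'"
proof (induction "card E" arbitrary: E rule: less_induct)
  case less
  show ?case
  proof (cases "is_min_vertex_cover_path n E")
    case True then show ?thesis by blast
  next
    case False
    then obtain D where D: "D \<subset> E" "is_vertex_cover_path n D"
      using less.prems unfolding is_min_vertex_cover_path_def by blast
    have "finite E" using cover_sub[OF less.prems] finite_subset by blast
    then have "card D < card E" using D(1) by (simp add: psubset_card_mono)
    then obtain E' where "E' \<subseteq> D" "is_min_vertex_cover_path n E'" using less.hyps D(2) by blast
    then show ?thesis using D(1) by blast
  qed
qed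

lemma expvec_nth: "p < k \<Longrightarrow> expvec k a b ! p = (if Suc p = a then 1 else 0) + (if Suc p = b then 1 else 0)"
  unfolding expvec_def by (simp del: upt_Suc)

lemma expvec_len: "length (expvec k a b) = k"
  unfolding expvec_def by (simp del: upt_Suc)

lemma lex_lemma:
  assumes "1 \<le> a" "a < i" "i < j" "j \<le> k" "1 \<le> b" "b \<le> k"
  shows "lex_gt (expvec k a b) (expvec k i j)"
proof -
  define c where "c = min a b"
  have c: "1 \<le> c" "c < i" "c \<le> k" "c = a \<or> c = b" using assms unfolding c_def by auto
  have tk: "take (c - 1) (expvec k i j) = take (c - 1) (expvec k a b)"
  proof (rule nth_equalityI)
    show "length (take (c - 1) (expvec k i j)) = length (take (c - 1) (expvec k a b))"
      by (simp add: expvec_len)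
    fix p assume p: "p < length (take (c - 1) (expvec k i j))"
    then have p1: "p < c - 1" "p < k" by (auto simp: expvec_len)
    have "Suc p \<noteq> a" "Suc p \<noteq> b" "Suc p \<noteq> i" "Suc p \<noteq> j" using p1 c assms unfolding c_def by auto
    then show "take (c - 1) (expvec k i j) ! p = take (c - 1) (expvec k a b) ! p"
      using p1 by (simp add: expvec_nth)
  qed
  have "expvec k i j ! (c - 1) = 0" using c assms by (simp add: expvec_nth)
  moreover have "expvec k a b ! (c - 1) \<ge> 1" using c by (auto simp: expvec_nth)
  ultimately have lt: "(expvec k i j ! (c - 1), expvec k a b ! (c - 1)) \<in> {(x, y). x < y}" by simp
  have "c - 1 < min (length (expvec k i j)) (length (expvec k a b))" using c by (simp add: expvec_len)
  then show ?thesis unfolding lex_gt_def lexord_take_index_conv using tk lt by blast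
qed

lemma set_mset_ms: "finite A \<Longrightarrow> set_mset (mset_set A) = A" by simp

theorem proposition4p2:
  fixes n i j :: nat
  assumes "n \<ge> 2"
    and "1 < i" and "i < j" and "j \<le> length (rooted n)"
    and "\<exists>v. 1 \<le> v \<and> v \<le> n \<and> v \<in># rooted n ! (j - 1) \<and>
           in_mideal {rooted n ! (l - 1) | l. 1 \<le> l \<and> l < i} ({#v#} + rooted n ! (i - 1))"
  shows "rooted n ! (i - 1) + rooted n ! (j - 1) \<notin> min_gens (F2 (cover_gens n))
         \<or> \<not> is_max_expr n i j"
proof -
  define k where "k = length (rooted n)"
  from assms(5) obtain v where v: "v \<in># rooted n ! (j - 1)"
    and im: "in_mideal {rooted n ! (l - 1) | l. 1 \<le> l \<and> l < i} ({#v#} + rooted n ! (i - 1))" by blast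
  from im obtain l where l: "1 \<le> l" "l < i" "rooted n ! (l - 1) \<subseteq># {#v#} + rooted n ! (i - 1)"
    unfolding in_mideal_def by blast
  have snd: "sound n" and srt: "sorted_wrt vlt (rooted n)" using rooted_sound_all[OF assms(1)] by auto
  have ik: "i - 1 < k" and jk: "j - 1 < k" and lk: "l - 1 < k" and li: "l - 1 < i - 1"
    using assms l unfolding k_def by auto
  obtain A where A: "rooted n ! (i - 1) = mset_set A" "is_min_vertex_cover_path n A"
    using snd nth_mem[OF ik[unfolded k_def]] unfolding sound_def by blast
  obtain B where B: "rooted n ! (j - 1) = mset_set B" "is_min_vertex_cover_path n B"
    using snd nth_mem[OF jk[unfolded k_def]] unfolding sound_def by blast
  obtain C where C: "rooted n ! (l - 1) = mset_set C" "is_min_vertex_cover_path n C"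
    using snd nth_mem[OF lk[unfolded k_def]] unfolding sound_def by blast
  have finA: "finite A" using mc_fin[OF A(2)] .
  have finB: "finite B" using mc_fin[OF B(2)] .
  have finC: "finite C" using mc_fin[OF C(2)] .
  have "vlt (rooted n ! (l - 1)) (rooted n ! (i - 1))"
    using sorted_wrt_nth_less[OF srt li ik[unfolded k_def]] .
  then have vCA: "val C < val A" unfolding vlt_def A C using finA finC by simp
  have "set_mset (rooted n ! (l - 1)) \<subseteq> set_mset ({#v#} + rooted n ! (i - 1))"
    using l(3) by (rule set_mset_mono)
  then have CA: "C \<subseteq> insert v A" unfolding A C using finA finC by simp
  have vB: "v \<in> B" using v unfolding B using finB by simp
  obtain E F where EF: "is_vertex_cover_path n E" "is_vertex_cover_path n F" "val E < val A"
     "mset_set E + mset_set F \<subseteq># mset_set A + mset_set B"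
    using main_comb[OF A(2) mc_cover[OF B(2)] vB mc_cover[OF C(2)] CA vCA] by blast
  obtain E' where E': "E' \<subseteq> E" "is_min_vertex_cover_path n E'" using sub_min[OF EF(1)] by blast
  obtain F' where F': "F' \<subseteq> F" "is_min_vertex_cover_path n F'" using sub_min[OF EF(2)] by blast
  have finE: "finite E" using cover_sub[OF EF(1)] finite_subset by blast
  have finF: "finite F" using cover_sub[OF EF(2)] finite_subset by blast
  have finE': "finite E'" using mc_fin[OF E'(2)] .
  have finF': "finite F'" using mc_fin[OF F'(2)] .
  have vE': "val E' < val A" using val_mono[OF finE E'(1)] EF(3) by simp
  have "mset_set E' \<in> set (rooted n)" using rooted_complete[OF assms(1) E'(2)] .
  then obtain a' where a': "a' < k" "rooted n ! a' = mset_set E'" unfolding k_def in_set_conv_nth by blast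
  have "mset_set F' \<in> set (rooted n)" using rooted_complete[OF assms(1) F'(2)] .
  then obtain b' where b': "b' < k" "rooted n ! b' = mset_set F'" unfolding k_def in_set_conv_nth by blast
  have ai: "a' < i - 1"
  proof (rule ccontr)
    assume "\<not> a' < i - 1"
    then have "a' = i - 1 \<or> i - 1 < a'" by auto
    then show False
    proof
      assume "a' = i - 1"
      then have "mset_set E' = mset_set A" using a' A by simp
      then have "E' = A" using finA finE' by (metis set_mset_ms)
      then show False using vE' by simp
    next
      assume "i - 1 < a'"
      then have "vlt (rooted n ! (i - 1)) (rooted n ! a')"
        using sorted_wrt_nth_less[OF srt _ a'(1)[unfolded k_def]] by blast
      then have "val A < val E'" unfolding vlt_def A a'(2) using finA finE' by simp
      then show False using vE' by simp
    qed
  qed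
  define P where "P = rooted n ! a' + rooted n ! b'"
  define Q where "Q = rooted n ! (i - 1) + rooted n ! (j - 1)"
  have "mset_set E' \<subseteq># mset_set E" using E'(1) finE finE' by simp
  moreover have "mset_set F' \<subseteq># mset_set F" using F'(1) finF finF' by simp
  ultimately have "mset_set E' + mset_set F' \<subseteq># mset_set E + mset_set F" by (rule subset_mset.add_mono)
  then have PQ: "P \<subseteq># Q" unfolding P_def Q_def a'(2) b'(2) A(1) B(1) using EF(4) by (rule subset_mset.order_trans)
  show ?thesis
  proof (cases "P = Q")
    case True
    have "\<not> is_max_expr n i j"
    proof
      assume H: "is_max_expr n i j"
      have le: "1 \<le> Suc a'" "Suc a' \<le> k" "1 \<le> Suc b'" "Suc b' \<le> k" using a' b' by auto
      have "rooted n ! (Suc a' - 1) + rooted n ! (Suc b' - 1) = rooted n ! (i - 1) + rooted n ! (j - 1)"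
        using True unfolding P_def Q_def by simp
      then have "\<not> lex_gt (expvec k (Suc a') (Suc b')) (expvec k i j)"
        using H le unfolding is_max_expr_def Let_def k_def by blast
      moreover have "lex_gt (expvec k (Suc a') (Suc b')) (expvec k i j)"
        by (rule lex_lemma) (use ai assms le in \<open>auto simp: k_def\<close>)
      ultimately show False by simp
    qed
    then show ?thesis by simp
  next
    case False
    have "Q \<notin> min_gens (F2 (cover_gens n))"
    proof
      assume H: "Q \<in> min_gens (F2 (cover_gens n))"
      have "mset_set E' \<in> cover_gens n" "mset_set F' \<in> cover_gens n"
        unfolding cover_gens_def using E'(2) F'(2) by blast+
      then have "P \<in> F2 (cover_gens n)" unfolding F2_def P_def a'(2) b'(2) by blast
      then have "in_mideal (F2 (cover_gens n)) P" unfolding in_mideal_def by blast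
      then have "P = Q" using H PQ unfolding min_gens_def by blast
      then show False using False by simp
    qed
    then show ?thesis unfolding Q_def by simp
  qed
qed

end
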